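(* Let $P$ be a continuous poset and $M$ a persistence module over $P$. The following are equivalent: (i) $M$ is ephemeral; (ii) $\overline M=0$; (iii) $\underline M=0$.
   Context: Let $P$ be a poset. A subset is directed if nonempty and any two elements have an upper bound in it. $x\ll y$ ($x$ way below $y$) means: for every directed $D$ whose supremum exists with $y\le\sup D$, some $d\in D$ satisfies $x\le d$. $P$ is continuous if for each $p$ the set $\{x:x\ll p\}$ is directed with supremum $p$. $k$ is a commutative ring with unity; a persistence module over $P$ is a functor $M$ from $P$ (as a category) to $k$-modules. Define persistence modules $\underline M_p=\varprojlim_{x\gg p}M_x$ and $\overline M_p=\varinjlim_{x\ll p}M_x$. $M$ is ephemeral if $M(p\le q)=0$ for all $p\ll q$. *)

theory Defs
  imports Complex_Main
begin

definition directed :: "'p::order set \<Rightarrow> bool" where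
  "directed D \<longleftrightarrow> D \<noteq> {} \<and> (\<forall>x\<in>D. \<forall>y\<in>D. \<exists>z\<in>D. x \<le> z \<and> y \<le> z)"

definition is_sup :: "'p::order set \<Rightarrow> 'p \<Rightarrow> bool" where
  "is_sup D s \<longleftrightarrow> (\<forall>d\<in>D. d \<le> s) \<and> (\<forall>u. (\<forall>d\<in>D. d \<le> u) \<longrightarrow> s \<le> u)"

definition way_below :: "'p::order \<Rightarrow> 'p \<Rightarrow> bool" (infix "\<lless>" 50) where
  "x \<lless> y \<longleftrightarrow> (\<forall>D. directed D \<longrightarrow> (\<forall>s. is_sup D s \<longrightarrow> y \<le> s \<longrightarrow> (\<exists>d\<in>D. x \<le> d)))"

definition continuous_poset :: "'p::order itself \<Rightarrow> bool" where
  "continuous_poset _ \<longleftrightarrow>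
     (\<forall>p::'p. directed {x. x \<lless> p} \<and> is_sup {x. x \<lless> p} p)"

definition pers_module ::
  "('k::comm_ring_1 \<Rightarrow> 'v::ab_group_add \<Rightarrow> 'v) \<Rightarrow> ('p::order \<Rightarrow> 'v set) \<Rightarrow> ('p \<Rightarrow> 'p \<Rightarrow> 'v \<Rightarrow> 'v) \<Rightarrow> bool"
where
  "pers_module scale V f \<longleftrightarrow>
     module scale \<and>
     (\<forall>p. module.subspace scale (V p)) \<and>
     (\<forall>p q. p \<le> q \<longrightarrow>
        (\<forall>v\<in>V p. f p q v \<in> V q) \<and>
        (\<forall>v\<in>V p. \<forall>w\<in>V p. f p q (v + w) = f p q v + f p q w) \<and>
        (\<forall>c. \<forall>v\<in>V p. f p q (scale c v) = scale c (f p q v))) \<and>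
     (\<forall>p. \<forall>v\<in>V p. f p p v = v) \<and>
     (\<forall>p q r. p \<le> q \<longrightarrow> q \<le> r \<longrightarrow> (\<forall>v\<in>V p. f q r (f p q v) = f p r v))"

definition ephemeral ::
  "('p::order \<Rightarrow> 'v::zero set) \<Rightarrow> ('p \<Rightarrow> 'p \<Rightarrow> 'v \<Rightarrow> 'v) \<Rightarrow> bool" where
  "ephemeral V f \<longleftrightarrow> (\<forall>p q. p \<lless> q \<longrightarrow> (\<forall>v\<in>V p. f p q v = 0))"

section \<open>The limit lim_{x >> p} M_x (standard construction: compatible families)\<close>

definition lower_lim :: "('p::order \<Rightarrow> 'v::zero set) \<Rightarrow> ('p \<Rightarrow> 'p \<Rightarrow> 'v \<Rightarrow> 'v) \<Rightarrow> 'p \<Rightarrow> ('p \<Rightarrow> 'v) set"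
where
  "lower_lim V f p = {g. (\<forall>x. p \<lless> x \<longrightarrow> g x \<in> V x) \<and> (\<forall>x. \<not> p \<lless> x \<longrightarrow> g x = 0) \<and>
      (\<forall>x y. p \<lless> x \<longrightarrow> p \<lless> y \<longrightarrow> x \<le> y \<longrightarrow> f x y (g x) = g y)}"

definition lower_zero :: "('p::order \<Rightarrow> 'v::zero set) \<Rightarrow> ('p \<Rightarrow> 'p \<Rightarrow> 'v \<Rightarrow> 'v) \<Rightarrow> bool" where
  "lower_zero V f \<longleftrightarrow> (\<forall>p. lower_lim V f p = {\<lambda>_. 0})"

section \<open>The colimit colim_{x << p} M_x (standard construction: direct sum modulo relations)\<close>

definition colim_dsum :: "('p::order \<Rightarrow> 'v::zero set) \<Rightarrow> 'p \<Rightarrow> ('p \<Rightarrow> 'v) set" where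
  "colim_dsum V p = {g. (\<forall>x. g x \<in> V x) \<and> (\<forall>x. \<not> x \<lless> p \<longrightarrow> g x = 0) \<and> finite {x. g x \<noteq> 0}}"

inductive_set colim_rel ::
  "('k::comm_ring_1 \<Rightarrow> 'v::ab_group_add \<Rightarrow> 'v) \<Rightarrow> ('p::order \<Rightarrow> 'v set) \<Rightarrow> ('p \<Rightarrow> 'p \<Rightarrow> 'v \<Rightarrow> 'v) \<Rightarrow> 'p \<Rightarrow> ('p \<Rightarrow> 'v) set"
  for scale V f p
where
  rel_zero: "(\<lambda>_. 0) \<in> colim_rel scale V f p"
| rel_add: "a \<in> colim_rel scale V f p \<Longrightarrow> b \<in> colim_rel scale V f p \<Longrightarrow>
             (\<lambda>z. a z + b z) \<in> colim_rel scale V f p"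
| rel_scale: "a \<in> colim_rel scale V f p \<Longrightarrow> (\<lambda>z. scale c (a z)) \<in> colim_rel scale V f p"
| rel_gen: "x \<lless> p \<Longrightarrow> y \<lless> p \<Longrightarrow> x \<le> y \<Longrightarrow> m \<in> V x \<Longrightarrow>
             (\<lambda>z. (if z = x then m else 0) - (if z = y then f x y m else 0)) \<in> colim_rel scale V f p"

text \<open>overline M = 0: every quotient (direct sum)/(relations) is zero, i.e. the direct
  sum is contained in the relation submodule.\<close>
definition upper_zero ::
  "('k::comm_ring_1 \<Rightarrow> 'v::ab_group_add \<Rightarrow> 'v) \<Rightarrow> ('p::order \<Rightarrow> 'v set) \<Rightarrow> ('p \<Rightarrow> 'p \<Rightarrow> 'v \<Rightarrow> 'v) \<Rightarrow> bool"
where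
  "upper_zero scale V f \<longleftrightarrow> (\<forall>p. colim_dsum V p \<subseteq> colim_rel scale V f p)"

end

theory Submission imports Defs begin
lemma wb_le: "x \<lless> y \<Longrightarrow> x \<le> (y::'p::order)"
proof -
  assume a: "x \<lless> y"
  have "directed {y}" by (simp add: directed_def)
  moreover have "is_sup {y} y" by (simp add: is_sup_def)
  ultimately show ?thesis using a unfolding way_below_def by auto
qed

lemma wb_mono: "x \<le> x' \<Longrightarrow> x' \<lless> y \<Longrightarrow> y \<le> y' \<Longrightarrow> x \<lless> (y'::'p::order)"
  unfolding way_below_def by (meson order_trans)

lemma interp:
  assumes c: "continuous_poset TYPE('p::order)" and xp: "x \<lless> (p::'p)"
  shows "\<exists>z. x \<lless> z \<and> z \<lless> p"
proof -
  have C: "\<And>q::'p. directed {x. x \<lless> q} \<and> is_sup {x. x \<lless> q} q"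
    using c unfolding continuous_poset_def by blast
  define D where "D = {y::'p. \<exists>z. y \<lless> z \<and> z \<lless> p}"
  have dir: "directed D"
    unfolding directed_def
  proof
    obtain z where z: "z \<lless> p" using C[of p] unfolding directed_def by auto
    obtain y where "y \<lless> z" using C[of z] unfolding directed_def by auto
    then show "D \<noteq> {}" using z D_def by auto
  next
    show "\<forall>x\<in>D. \<forall>y\<in>D. \<exists>z\<in>D. x \<le> z \<and> y \<le> z"
    proof (intro ballI)
      fix y1 y2 assume "y1 \<in> D" "y2 \<in> D"
      then obtain z1 z2 where h: "y1 \<lless> z1" "z1 \<lless> p" "y2 \<lless> z2" "z2 \<lless> p"
        unfolding D_def by auto
      then obtain z3 where z3: "z3 \<lless> p" "z1 \<le> z3" "z2 \<le> z3"
        using C[of p] unfolding directed_def by blast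
      have "y1 \<lless> z3" "y2 \<lless> z3" using h z3 wb_mono by blast+
      then obtain y3 where "y3 \<lless> z3" "y1 \<le> y3" "y2 \<le> y3"
        using C[of z3] unfolding directed_def by blast
      then show "\<exists>z\<in>D. y1 \<le> z \<and> y2 \<le> z" using z3 D_def by auto
    qed
  qed
  have sup: "is_sup D p"
    unfolding is_sup_def
  proof (intro conjI allI impI ballI)
    fix d assume "d \<in> D"
    then show "d \<le> p" unfolding D_def using wb_le order_trans by blast
  next
    fix u assume u: "\<forall>d\<in>D. d \<le> u"
    have "\<forall>z\<in>{x. x \<lless> p}. z \<le> u"
    proof
      fix z assume z: "z \<in> {x. x \<lless> p}"
      have "\<forall>y\<in>{x. x \<lless> z}. y \<le> u" using u z D_def by auto
      then show "z \<le> u" using C[of z] unfolding is_sup_def by blast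
    qed
    then show "p \<le> u" using C[of p] unfolding is_sup_def by blast
  qed
  obtain d where "d \<in> D" "x \<le> d" using xp dir sup unfolding way_below_def by blast
  then obtain z where "d \<lless> z" "z \<lless> p" unfolding D_def by auto
  then show ?thesis using \<open>x \<le> d\<close> wb_mono by blast
qed


locale pm =
  fixes scale :: "'k::comm_ring_1 \<Rightarrow> 'v::ab_group_add \<Rightarrow> 'v"
    and V :: "'p::order \<Rightarrow> 'v set"
    and f :: "'p \<Rightarrow> 'p \<Rightarrow> 'v \<Rightarrow> 'v"
  assumes pm: "pers_module scale V f"
begin
lemmas PM = pm[unfolded pers_module_def]
lemma M: "module scale" using PM by (rule conjunct1)
lemma S: "module.subspace scale (V p)" using PM[THEN conjunct2, THEN conjunct1] by (rule spec)
lemma FF: "p \<le> q \<Longrightarrow> (\<forall>v\<in>V p. f p q v \<in> V q) \<and>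
        (\<forall>v\<in>V p. \<forall>w\<in>V p. f p q (v + w) = f p q v + f p q w) \<and>
        (\<forall>c. \<forall>v\<in>V p. f p q (scale c v) = scale c (f p q v))"
  using PM[THEN conjunct2, THEN conjunct2, THEN conjunct1] by blast
lemma fid: "v \<in> V p \<Longrightarrow> f p p v = v"
  using PM[THEN conjunct2, THEN conjunct2, THEN conjunct2, THEN conjunct1] by blast
lemma fcomp: "p \<le> q \<Longrightarrow> q \<le> r \<Longrightarrow> v \<in> V p \<Longrightarrow> f q r (f p q v) = f p r v"
  using PM[THEN conjunct2, THEN conjunct2, THEN conjunct2, THEN conjunct2] by blast
lemma V0: "0 \<in> V p" using module.subspace_0[OF M S] .
lemma Vadd: "a \<in> V p \<Longrightarrow> b \<in> V p \<Longrightarrow> a + b \<in> V p" using module.subspace_add[OF M S] .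
lemma Vdiff: "a \<in> V p \<Longrightarrow> b \<in> V p \<Longrightarrow> a - b \<in> V p" using module.subspace_diff[OF M S] .
lemma Vscale: "a \<in> V p \<Longrightarrow> scale c a \<in> V p" using module.subspace_scale[OF M S] .
lemma fV: "p \<le> q \<Longrightarrow> v \<in> V p \<Longrightarrow> f p q v \<in> V q" using FF by blast
lemma fadd: "p \<le> q \<Longrightarrow> v \<in> V p \<Longrightarrow> w \<in> V p \<Longrightarrow> f p q (v + w) = f p q v + f p q w"
  using FF by blast
lemma fscale: "p \<le> q \<Longrightarrow> v \<in> V p \<Longrightarrow> f p q (scale c v) = scale c (f p q v)"
  using FF by blast
lemma f0: "p \<le> q \<Longrightarrow> f p q 0 = 0"
  using fadd[of p q 0 0] V0[of p] by simp
lemma fdiff: "p \<le> q \<Longrightarrow> v \<in> V p \<Longrightarrow> w \<in> V p \<Longrightarrow> f p q (v - w) = f p q v - f p q w"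
  using fadd[of p q "v - w" w] Vdiff[of v p w] by (simp add: algebra_simps)
lemma fneg0: "p \<le> q \<Longrightarrow> v \<in> V p \<Longrightarrow> f p q (0 - v) = 0 - f p q v"
  using fdiff[of p q 0 v] V0 f0 by simp

lemma lower_eph: "lower_zero V f \<Longrightarrow> ephemeral V f"
  unfolding ephemeral_def
proof (intro allI impI ballI)
  fix p q m assume lz: "lower_zero V f" and pq: "p \<lless> q" and m: "m \<in> V p"
  define g where "g = (\<lambda>x. if p \<lless> x then f p x m else 0)"
  have "g \<in> lower_lim V f p"
    unfolding lower_lim_def g_def by (auto intro: fV[OF wb_le m] fcomp[OF wb_le _ m])
  then have "g = (\<lambda>_. 0)" using lz unfolding lower_zero_def by blast
  then have "g q = 0" by simp
  then show "f p q m = 0" using pq g_def by simp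
qed

lemma eph_lower:
  assumes c: "continuous_poset TYPE('p)" and e: "ephemeral V f"
  shows "lower_zero V f"
  unfolding lower_zero_def
proof
  fix p
  show "lower_lim V f p = {\<lambda>_. 0}"
  proof
    show "{\<lambda>_. 0} \<subseteq> lower_lim V f p"
      unfolding lower_lim_def using V0 f0 by auto
  next
    show "lower_lim V f p \<subseteq> {\<lambda>_. 0}"
    proof
      fix g assume g: "g \<in> lower_lim V f p"
      have "g x = 0" for x
      proof (cases "p \<lless> x")
        case True
        then obtain y where y: "p \<lless> y" "y \<lless> x" using interp[OF c] by blast
        have "f y x (g y) = g x" using g wb_le[OF y(2)] y(1) True unfolding lower_lim_def mem_Collect_eq by blast
        then have "g x = f y x (g y)" by simp
        also have "\<dots> = 0" using e y g unfolding ephemeral_def lower_lim_def by auto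
        finally show ?thesis .
      next
        case False then show ?thesis using g unfolding lower_lim_def by auto
      qed
      then show "g \<in> {\<lambda>_. 0}" by auto
    qed
  qed
qed

lemma delta_rel:
  assumes c: "continuous_poset TYPE('p)" and e: "ephemeral V f"
    and x: "x \<lless> p" and m: "m \<in> V x"
  shows "(\<lambda>z. if z = x then m else 0) \<in> colim_rel scale V f p"
proof -
  obtain y where y: "x \<lless> y" "y \<lless> p" using interp[OF c x] by blast
  have "(\<lambda>z. (if z = x then m else 0) - (if z = y then f x y m else 0)) \<in> colim_rel scale V f p"
    using y x m wb_le by (intro rel_gen) auto
  moreover have "f x y m = 0" using e y m unfolding ephemeral_def by auto
  moreover have "(\<lambda>z. (if z = x then m else 0) - (if z = y then f x y m else 0)) = (\<lambda>z. if z = x then m else 0)"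
    using \<open>f x y m = 0\<close> by auto
  ultimately show ?thesis by simp
qed

lemma fin_rel:
  assumes c: "continuous_poset TYPE('p)" and e: "ephemeral V f"
  shows "finite S \<Longrightarrow> \<forall>g. (\<forall>x. g x \<noteq> 0 \<longrightarrow> x \<in> S) \<longrightarrow> (\<forall>x\<in>S. x \<lless> p) \<longrightarrow> (\<forall>x. g x \<in> V x)
      \<longrightarrow> g \<in> colim_rel scale V f p"
proof (induction S rule: finite_induct)
  case empty
  then show ?case
  proof (intro allI impI)
    fix g :: "'p \<Rightarrow> 'v" assume "\<forall>x. g x \<noteq> 0 \<longrightarrow> x \<in> {}"
    then have "g = (\<lambda>_. 0)" by auto
    then show "g \<in> colim_rel scale V f p" using rel_zero by simp
  qed
next
  case (insert a S)
  show ?case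
  proof (intro allI impI)
    fix g :: "'p \<Rightarrow> 'v" assume g1: "\<forall>x. g x \<noteq> 0 \<longrightarrow> x \<in> insert a S" and g2: "\<forall>x\<in>insert a S. x \<lless> p"
      and g3: "\<forall>x. g x \<in> V x"
    define g' where "g' = g(a := 0)"
    have "g' \<in> colim_rel scale V f p"
    proof -
      have "\<forall>x. g' x \<noteq> 0 \<longrightarrow> x \<in> S" using g1 unfolding g'_def by auto
      moreover have "\<forall>x. g' x \<in> V x" using g3 V0 unfolding g'_def by auto
      ultimately show ?thesis using insert.IH g2 by blast
    qed
    moreover have "(\<lambda>z. if z = a then g a else 0) \<in> colim_rel scale V f p"
      using delta_rel[OF c e] g2 g3 by auto
    ultimately have "(\<lambda>z. g' z + (if z = a then g a else 0)) \<in> colim_rel scale V f p"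
      by (rule rel_add)
    moreover have "(\<lambda>z. g' z + (if z = a then g a else 0)) = g" unfolding g'_def by auto
    ultimately show "g \<in> colim_rel scale V f p" by simp
  qed
qed

lemma eph_upper:
  assumes c: "continuous_poset TYPE('p)" and e: "ephemeral V f"
  shows "upper_zero scale V f"
  unfolding upper_zero_def
proof (intro allI subsetI)
  fix p g assume g: "g \<in> colim_dsum V p"
  show "g \<in> colim_rel scale V f p"
    using fin_rel[OF c e, of "{x. g x \<noteq> 0}" p] g unfolding colim_dsum_def by auto
qed

definition inv where
  "inv q g \<longleftrightarrow> (\<exists>u T. finite T \<and> u \<lless> q \<and> (\<forall>x\<in>T. x \<le> u) \<and> (\<forall>x. x \<notin> T \<longrightarrow> g x = 0)
     \<and> (\<forall>x. g x \<in> V x) \<and> (\<forall>w. u \<le> w \<longrightarrow> w \<lless> q \<longrightarrow> (\<Sum>x\<in>T. f x w (g x)) = 0))"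

lemma rel_inv:
  assumes c: "continuous_poset TYPE('p)"
  shows "g \<in> colim_rel scale V f q \<Longrightarrow> inv q g"
proof (induction rule: colim_rel.induct)
  case rel_zero
  obtain u where "u \<lless> q" using c unfolding continuous_poset_def directed_def by blast
  then show ?case unfolding inv_def using V0 by (intro exI[of _ u] exI[of _ "{}"]) auto
next
  case (rel_add a b)
  obtain ua Ta where A: "finite Ta" "ua \<lless> q" "\<forall>x\<in>Ta. x \<le> ua" "\<forall>x. x \<notin> Ta \<longrightarrow> a x = 0"
     "\<forall>x. a x \<in> V x" "\<forall>w. ua \<le> w \<longrightarrow> w \<lless> q \<longrightarrow> (\<Sum>x\<in>Ta. f x w (a x)) = 0"
    using rel_add.IH(1) unfolding inv_def by blast
  obtain ub Tb where B: "finite Tb" "ub \<lless> q" "\<forall>x\<in>Tb. x \<le> ub" "\<forall>x. x \<notin> Tb \<longrightarrow> b x = 0"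
     "\<forall>x. b x \<in> V x" "\<forall>w. ub \<le> w \<longrightarrow> w \<lless> q \<longrightarrow> (\<Sum>x\<in>Tb. f x w (b x)) = 0"
    using rel_add.IH(2) unfolding inv_def by blast
  obtain u where u: "u \<lless> q" "ua \<le> u" "ub \<le> u"
    using c A(2) B(2) unfolding continuous_poset_def directed_def by blast
  let ?T = "Ta \<union> Tb"
  have Tu: "\<forall>x\<in>?T. x \<le> u" using A(3) B(3) u order_trans by blast
  have "(\<Sum>x\<in>?T. f x w (a x + b x)) = 0" if w: "u \<le> w" "w \<lless> q" for w
  proof -
    have le: "\<forall>x\<in>?T. x \<le> w" using Tu w order_trans by blast
    have "(\<Sum>x\<in>?T. f x w (a x + b x)) = (\<Sum>x\<in>?T. f x w (a x)) + (\<Sum>x\<in>?T. f x w (b x))"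
      using le A(5) B(5) fadd by (simp add: sum.distrib)
    also have "(\<Sum>x\<in>?T. f x w (a x)) = (\<Sum>x\<in>Ta. f x w (a x))"
      using A(1) B(1) A(4) le f0 by (intro sum.mono_neutral_right) auto
    also have "(\<Sum>x\<in>?T. f x w (b x)) = (\<Sum>x\<in>Tb. f x w (b x))"
      using A(1) B(1) B(4) le f0 by (intro sum.mono_neutral_right) auto
    finally show ?thesis using A(6) B(6) u w order_trans by auto
  qed
  then show ?case unfolding inv_def using A B u Tu Vadd
    by (intro exI[of _ u] exI[of _ ?T]) auto
next
  case (rel_scale a cc)
  obtain u T where A: "finite T" "u \<lless> q" "\<forall>x\<in>T. x \<le> u" "\<forall>x. x \<notin> T \<longrightarrow> a x = 0"
     "\<forall>x. a x \<in> V x" "\<forall>w. u \<le> w \<longrightarrow> w \<lless> q \<longrightarrow> (\<Sum>x\<in>T. f x w (a x)) = 0"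
    using rel_scale.IH unfolding inv_def by blast
  have "(\<Sum>x\<in>T. f x w (scale cc (a x))) = 0" if w: "u \<le> w" "w \<lless> q" for w
  proof -
    have "(\<Sum>x\<in>T. f x w (scale cc (a x))) = (\<Sum>x\<in>T. scale cc (f x w (a x)))"
      using A(3,5) w fscale order_trans by (intro sum.cong) blast+
    also have "\<dots> = scale cc (\<Sum>x\<in>T. f x w (a x))"
      using module.scale_sum_right[OF M] by metis
    finally show ?thesis using A(6) w module.scale_zero_right[OF M] by simp
  qed
  then show ?case unfolding inv_def using A Vscale module.scale_zero_right[OF M]
    by (intro exI[of _ u] exI[of _ T]) auto
next
  case (rel_gen x y m)
  let ?g = "\<lambda>z. (if z = x then m else 0) - (if z = y then f x y m else 0)"
  have xy: "x \<le> y" by fact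
  have gV: "\<forall>z. ?g z \<in> V z" using rel_gen V0 Vdiff fV by auto
  have "(\<Sum>z\<in>{x,y}. f z w (?g z)) = 0" if w: "y \<le> w" "w \<lless> q" for w
  proof (cases "x = y")
    case True
    then show ?thesis using fid rel_gen f0 w by simp
  next
    case False
    have "(\<Sum>z\<in>{x,y}. f z w (?g z)) = f x w m + f y w (0 - f x y m)"
      using False by simp
    also have "\<dots> = 0" using fneg0[of y w "f x y m"] fV[OF xy rel_gen(4)] w fcomp[OF xy w(1) rel_gen(4)]
      by simp
    finally show ?thesis .
  qed
  then show ?case unfolding inv_def using gV rel_gen xy
    by (intro exI[of _ y] exI[of _ "{x,y}"]) auto
qed

lemma upper_eph:
  assumes c: "continuous_poset TYPE('p)" and uz: "upper_zero scale V f"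
  shows "ephemeral V f"
  unfolding ephemeral_def
proof (intro allI impI ballI)
  fix p q m assume pq: "p \<lless> q" and m: "m \<in> V p"
  show "f p q m = 0"
  proof (cases "m = 0")
    case True then show ?thesis using f0[OF wb_le[OF pq]] by simp
  next
    case False
    let ?d = "\<lambda>z. if z = p then m else 0"
    have "?d \<in> colim_dsum V q" unfolding colim_dsum_def using m V0 pq
      by auto
    then have "inv q ?d" using uz rel_inv[OF c] unfolding upper_zero_def by blast
    then obtain u T where A: "finite T" "u \<lless> q" "\<forall>x\<in>T. x \<le> u" "\<forall>x. x \<notin> T \<longrightarrow> ?d x = 0"
     "\<forall>w. u \<le> w \<longrightarrow> w \<lless> q \<longrightarrow> (\<Sum>x\<in>T. f x w (?d x)) = 0"
      unfolding inv_def by blast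
    have pT: "p \<in> T" using A(4) False by auto
    have "(\<Sum>x\<in>T. f x u (?d x)) = 0" using A(2,5) by blast
    moreover have "(\<Sum>x\<in>{p}. f x u (?d x)) = (\<Sum>x\<in>T. f x u (?d x))"
      using A(1,3) pT f0 by (intro sum.mono_neutral_left) auto
    ultimately have pu: "f p u m = 0" by simp
    have "f p q m = f u q (f p u m)" using fcomp[of p u q m] A(3) pT wb_le[OF A(2)] m by simp
    then show ?thesis using pu f0[OF wb_le[OF A(2)]] by simp
  qed
qed
end

theorem mainTheorem6:
  fixes scale :: "'k::comm_ring_1 \<Rightarrow> 'v::ab_group_add \<Rightarrow> 'v"
    and V :: "'p::order \<Rightarrow> 'v set"
    and f :: "'p \<Rightarrow> 'p \<Rightarrow> 'v \<Rightarrow> 'v"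
  assumes "continuous_poset TYPE('p)"
    and "pers_module scale V f"
  shows "(ephemeral V f \<longleftrightarrow> upper_zero scale V f) \<and> (ephemeral V f \<longleftrightarrow> lower_zero V f)"
proof -
  interpret pm scale V f by standard (fact assms(2))
  show ?thesis using assms(1) eph_upper upper_eph eph_lower lower_eph by blast
qed

end
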